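(* Let $g\ge1$, $n=g+1$, let $B\in\mathbb Z^{g\times n}$ have $B_{i,1}=1$, $B_{i,i+1}=-1$ and all other entries $0$, and $Q=BB^T$. Let $B^T(V_Q)$ denote the convex hull of $\{B^T\mathbf a:\mathbf a \text{ a vertex of } V_Q\}\subset\mathbb R^n$. Then $V_Q$ and $B^T(V_Q)$ are combinatorially equivalent, and the vertex set of $B^T(V_Q)$ is $\bigcup_{k=1}^gB^T([\mathbf k])$, where $B^T([\mathbf k])$ is the set of all coordinate permutations of the vector in $\mathbb R^n$ having $n-k$ entries equal to $\tfrac{k}{g+1}$ and $k$ entries equal to $-\tfrac{g+1-k}{g+1}$. Moreover, $B^T(V_Q)=\pi'(C^n)$, where $C^n=[-\tfrac12,\tfrac12]^n$ and $\pi':\mathbb R^n\to\mathbb R^n$ is the linear map with matrix entries $\pi'_{ii}=\tfrac{g}{g+1}$ and $\pi'_{ij}=-\tfrac1{g+1}$ for $i\neq j$ (the orthogonal projection along $(1,\dots,1)$).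
   Context: $V_Q=\{\mathbf a\in\mathbb R^g:\ \mathbf a^TQ\mathbf a\le(\mathbf a-\mathbf c)^TQ(\mathbf a-\mathbf c)\ \forall\mathbf c\in\mathbb Z^g\}$. For $k=1,\dots,g$, $[\mathbf k]\subset\mathbb R^g$ denotes the set of vectors with entries in $\{-\tfrac{k}{g+1},\tfrac{g+1-k}{g+1}\}$ having either $k$ or $k-1$ entries equal to $\tfrac{g+1-k}{g+1}$ (these are the vertices of $V_Q$), and $B^T([\mathbf k])=\{B^T\mathbf a:\mathbf a\in[\mathbf k]\}$. Two polytopes are combinatorially equivalent if there is an inclusion-preserving bijection between their face lattices. *)

theory Defs
  imports "HOL-Analysis.Analysis"
begin

text \<open>We model R^g as real^'g for an arbitrary finite index type 'g (so g = CARD('g) >= 1),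
and R^n, n = g+1, as real^('g option): the coordinate None plays the role of the
first column index 1, and Some i plays the role of column index i+1.\<close>

definition gnum :: "'g::finite itself \<Rightarrow> real" where
  "gnum _ = real CARD('g)"

definition Bmat :: "real^('g::finite option)^'g" where
  "Bmat = (\<chi> i j. case j of None \<Rightarrow> 1 | Some l \<Rightarrow> (if l = i then -1 else 0))"

definition Qmat :: "real^'g::finite^'g" where
  "Qmat = Bmat ** transpose Bmat"

definition int_vecs :: "(real^'g::finite) set" where
  "int_vecs = {c. \<forall>i. c $ i \<in> \<int>}"

definition voronoi_Q :: "(real^'g::finite) set" where
  "voronoi_Q = {a. \<forall>c\<in>int_vecs. a \<bullet> (Qmat *v a) \<le> (a - c) \<bullet> (Qmat *v (a - c))}"

definition BT :: "real^('g::finite) \<Rightarrow> real^('g option)" where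
  "BT a = transpose Bmat *v a"

definition vertex_class :: "nat \<Rightarrow> (real^'g::finite) set" where
  "vertex_class k = {a. (\<forall>i. a $ i \<in> {- real k / (gnum TYPE('g) + 1),
                                          (gnum TYPE('g) + 1 - real k) / (gnum TYPE('g) + 1)}) \<and>
      card {i. a $ i = (gnum TYPE('g) + 1 - real k) / (gnum TYPE('g) + 1)} \<in> {k, k - 1}}"

definition perm_class :: "nat \<Rightarrow> (real^('g::finite option)) set" where
  "perm_class k = {x. (\<forall>j. x $ j \<in> {real k / (gnum TYPE('g) + 1),
                                        - (gnum TYPE('g) + 1 - real k) / (gnum TYPE('g) + 1)}) \<and>
      card {j. x $ j = - (gnum TYPE('g) + 1 - real k) / (gnum TYPE('g) + 1)} = k}"

definition BT_VQ :: "(real^('g::finite option)) set" where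
  "BT_VQ = convex hull (BT ` {v :: real^'g. v extreme_point_of voronoi_Q})"

definition proj_mat :: "real^('g::finite option)^('g option)" where
  "proj_mat = (\<chi> i j. if i = j then gnum TYPE('g) / (gnum TYPE('g) + 1)
                                  else - 1 / (gnum TYPE('g) + 1))"

definition cube :: "(real^'n::finite) set" where
  "cube = {x. \<forall>j. \<bar>x $ j\<bar> \<le> 1/2}"

definition comb_equiv :: "('a::real_vector) set \<Rightarrow> ('b::real_vector) set \<Rightarrow> bool" where
  "comb_equiv P P' \<longleftrightarrow> (\<exists>f. bij_betw f {F. F face_of P} {G. G face_of P'} \<and>
      (\<forall>F1 F2. F1 face_of P \<longrightarrow> F2 face_of P \<longrightarrow> (F1 \<subseteq> F2 \<longleftrightarrow> f F1 \<subseteq> f F2)))"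

end

theory Submission imports Defs begin

lemma sum_option: "(\<Sum>j\<in>(UNIV::'a::finite option set). f j) = f None + (\<Sum>l\<in>UNIV. f (Some l))"
proof -
  have "(\<Sum>j\<in>(UNIV::'a option set). f j) = (\<Sum>j\<in>insert None (range Some). f j)"
    by (simp add: UNIV_option_conv)
  also have "\<dots> = f None + (\<Sum>j\<in>range Some. f j)"
    by (subst sum.insert) auto
  also have "(\<Sum>j\<in>range Some. f j) = (\<Sum>l\<in>UNIV. f (Some l))"
    by (subst sum.reindex) (auto simp: inj_on_def)
  finally show ?thesis .
qed

lemma card_opt: "real CARD('g::finite option) = gnum TYPE('g) + 1"
  by (simp add: gnum_def)

lemma gnum_pos: "gnum TYPE('g::finite) \<ge> 1"
  by (simp add: gnum_def Suc_le_eq)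

lemma BT_None: "(BT a :: real^('g::finite option)) $ None = (\<Sum>i\<in>UNIV. a $ i)"
  by (simp add: BT_def Bmat_def vector_matrix_mult_def)

lemma BT_Some: "(BT a :: real^('g::finite option)) $ Some l = - a $ l"
  by (simp add: BT_def Bmat_def vector_matrix_mult_def if_distrib cong: if_cong)

lemma BT_sum: "(\<Sum>j\<in>UNIV. (BT a :: real^('g::finite option)) $ j) = 0"
  by (simp add: sum_option BT_None BT_Some sum_negf)

lemma BT_linear: "linear (BT :: real^'g::finite \<Rightarrow> real^('g option))"
  unfolding BT_def[abs_def] by (rule matrix_vector_mul_linear)

lemma BT_inj: "inj (BT :: real^'g::finite \<Rightarrow> real^('g option))"
  by (auto simp: inj_on_def vec_eq_iff BT_Some dest: spec[where x="Some _"])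

definition BTinv :: "real^('g::finite option) \<Rightarrow> real^'g" where
  "BTinv x = (\<chi> l. - x $ Some l)"

lemma BT_BTinv: "(\<Sum>j\<in>UNIV. x $ j) = 0 \<Longrightarrow> BT (BTinv x :: real^'g::finite) = x"
  unfolding vec_eq_iff
proof
  fix j :: "'g option"
  assume s: "(\<Sum>j\<in>UNIV. x $ j) = 0"
  show "BT (BTinv x :: real^'g) $ j = x $ j"
  proof (cases j)
    case None
    then show ?thesis using s by (simp add: BT_None BTinv_def sum_option sum_negf)
  qed (simp add: BT_Some BTinv_def)
qed

lemma Q_form: "a \<bullet> (Qmat *v a) = BT a \<bullet> BT (a :: real^'g::finite)"
proof -
  have "a \<bullet> (Qmat *v a) = a \<bullet> (Bmat *v (transpose Bmat *v a))"
    by (simp add: Qmat_def matrix_vector_mul_assoc[symmetric])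
  also have "\<dots> = (a v* Bmat) \<bullet> (transpose Bmat *v a)"
    by (simp add: dot_lmul_matrix)
  also have "\<dots> = BT a \<bullet> BT a" by (simp add: BT_def)
  finally show ?thesis .
qed

lemma proj_apply: "(proj_mat *v c) $ i = c $ i - (\<Sum>j\<in>UNIV. c $ j) / (gnum TYPE('g) + 1)"
  for c :: "real^('g::finite option)"
proof -
  have "(proj_mat *v c) $ i = (\<Sum>j\<in>UNIV. (if i = j then gnum TYPE('g) / (gnum TYPE('g) + 1) else - 1 / (gnum TYPE('g) + 1)) * c $ j)"
    by (simp add: proj_mat_def matrix_vector_mult_def)
  also have "\<dots> = (\<Sum>j\<in>UNIV. (if i = j then c $ j else 0) - c $ j / (gnum TYPE('g) + 1))"
  proof (intro sum.cong refl)
    fix j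
    have n: "gnum TYPE('g) + 1 \<noteq> 0" using gnum_pos[where 'g='g] by linarith
    show "(if i = j then gnum TYPE('g) / (gnum TYPE('g) + 1) else - 1 / (gnum TYPE('g) + 1)) * c $ j =
      (if i = j then c $ j else 0) - c $ j / (gnum TYPE('g) + 1)"
      using n by (cases "i = j") (simp_all add: field_simps)
  qed
  also have "\<dots> = c $ i - (\<Sum>j\<in>UNIV. c $ j) / (gnum TYPE('g) + 1)"
    by (simp only: sum_subtractf sum_divide_distrib[symmetric]) simp
  finally show ?thesis .
qed


definition Pset :: "(real^('g::finite option)) set" where
  "Pset = {x. (\<Sum>j\<in>UNIV. x $ j) = 0 \<and> (\<forall>i j. x $ i - x $ j \<le> 1)}"

lemma sum_proj: "(\<Sum>j\<in>UNIV. (proj_mat *v c) $ j) = 0" for c :: "real^('g::finite option)"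
proof -
  have n: "gnum TYPE('g) + 1 \<noteq> 0" using gnum_pos[where 'g='g] by linarith
  have "(\<Sum>j\<in>UNIV. (proj_mat *v c) $ j) = (\<Sum>j\<in>UNIV. c $ j) - real CARD('g option) * ((\<Sum>j\<in>UNIV. c $ j) / (gnum TYPE('g) + 1))"
    by (simp add: proj_apply sum_subtractf)
  also have "\<dots> = 0" using n by (simp only: card_opt) simp
  finally show ?thesis .
qed

lemma P_eq: "(\<lambda>x. proj_mat *v x) ` (cube :: (real^('g::finite option)) set) = Pset"
proof
  show "(\<lambda>x. proj_mat *v x) ` (cube :: (real^('g::finite option)) set) \<subseteq> Pset"
  proof clarify
    fix c :: "real^('g option)" assume c: "c \<in> cube"
    show "proj_mat *v c \<in> Pset"
      unfolding Pset_def
    proof (intro CollectI conjI allI)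
      fix i j :: "'g option"
      have "\<bar>c $ i\<bar> \<le> 1/2" "\<bar>c $ j\<bar> \<le> 1/2" using c by (auto simp: cube_def)
      then show "(proj_mat *v c) $ i - (proj_mat *v c) $ j \<le> 1"
        by (simp add: proj_apply)
    qed (rule sum_proj)
  qed
next
  show "Pset \<subseteq> (\<lambda>x. proj_mat *v x) ` (cube :: (real^('g::finite option)) set)"
  proof
    fix x :: "real^('g option)" assume x: "x \<in> Pset"
    define M where "M = Max (range (\<lambda>j. x $ j))"
    have le: "x $ j \<le> M" for j unfolding M_def by (rule Max_ge) auto
    have "M \<in> range (\<lambda>j. x $ j)" unfolding M_def by (rule Max_in) auto
    then obtain j0 where j0: "M = x $ j0" by auto
    define c where "c = (\<chi> j. x $ j + 1/2 - M)"
    have "c \<in> cube" unfolding cube_def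
    proof (intro CollectI allI)
      fix j
      have "x $ j \<le> M" "M - x $ j \<le> 1" using le x j0 by (auto simp: Pset_def)
      moreover have "c $ j = x $ j + 1/2 - M" by (simp add: c_def)
      ultimately show "\<bar>c $ j\<bar> \<le> 1/2" by (simp only: abs_le_iff) linarith
    qed
    moreover have "proj_mat *v c = x"
    proof -
      have n: "gnum TYPE('g) + 1 \<noteq> 0" using gnum_pos[where 'g='g] by linarith
      have s: "(\<Sum>j\<in>UNIV. c $ j) = (gnum TYPE('g) + 1) * (1/2 - M)"
      proof -
        have "(\<Sum>j\<in>UNIV. c $ j) = (\<Sum>j\<in>UNIV. x $ j + (1/2 - M))" by (simp add: c_def algebra_simps)
        also have "\<dots> = (\<Sum>j\<in>UNIV. x $ j) + real CARD('g option) * (1/2 - M)"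
          by (simp only: sum.distrib sum_constant)
        also have "\<dots> = (gnum TYPE('g) + 1) * (1/2 - M)" using x by (simp only: card_opt) (simp add: Pset_def)
        finally show ?thesis .
      qed
      show ?thesis unfolding vec_eq_iff
        using n by (simp add: proj_apply s) (simp add: c_def)
    qed
    ultimately show "x \<in> (\<lambda>x. proj_mat *v x) ` cube" by (metis image_eqI)
  qed
qed

lemma int_term: assumes "\<bar>c\<bar> \<le> 1/2" "(y::real) \<in> \<int>" shows "2 * c * y \<le> y * y"
proof -
  obtain m where m: "y = of_int m" using assms(2) Ints_cases by blast
  show ?thesis
  proof (cases "m = 0")
    case False
    then have y1: "\<bar>y\<bar> \<ge> 1" using m by linarith
    have "2 * c * y \<le> \<bar>2 * c * y\<bar>" by simp
    also have "\<dots> = (2 * \<bar>c\<bar>) * \<bar>y\<bar>" by (simp add: abs_mult)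
    also have "\<dots> \<le> 1 * \<bar>y\<bar>" using assms(1) by (intro mult_right_mono) auto
    also have "\<dots> \<le> \<bar>y\<bar> * \<bar>y\<bar>" using y1 by (intro mult_right_mono) auto
    also have "\<dots> = y * y" by (simp add: abs_mult[symmetric])
    finally show ?thesis .
  qed (simp add: m)
qed

lemma lat_char:
  fixes x :: "real^('g::finite option)"
  assumes s: "(\<Sum>j\<in>UNIV. x $ j) = 0"
  shows "(\<forall>y. (\<forall>j. y $ j \<in> \<int>) \<and> (\<Sum>j\<in>UNIV. y $ j) = 0 \<longrightarrow> x \<bullet> x \<le> (x - y) \<bullet> (x - y))
     \<longleftrightarrow> x \<in> Pset"
proof
  assume H: "\<forall>y. (\<forall>j. y $ j \<in> \<int>) \<and> (\<Sum>j\<in>UNIV. y $ j) = 0 \<longrightarrow> x \<bullet> x \<le> (x - y) \<bullet> (x - y)"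
  show "x \<in> Pset" unfolding Pset_def
  proof (intro CollectI conjI allI)
    fix i j :: "'g option"
    show "x $ i - x $ j \<le> 1"
    proof (cases "i = j")
      case False
      define y :: "real^('g option)" where "y = axis i 1 - axis j 1"
      have yi: "\<forall>k. y $ k \<in> \<int>" by (simp add: y_def axis_def)
      have ys: "(\<Sum>k\<in>UNIV. y $ k) = 0" by (simp add: y_def axis_def sum_subtractf)
      have "x \<bullet> x \<le> (x - y) \<bullet> (x - y)" using H yi ys by blast
      moreover have "(x - y) \<bullet> (x - y) = x \<bullet> x - 2 * (x \<bullet> y) + y \<bullet> y"
        by (simp add: inner_diff_left inner_diff_right inner_commute)
      moreover have "x \<bullet> y = x $ i - x $ j" by (simp add: y_def inner_diff_right inner_axis)
      moreover have "y \<bullet> y = 2" using False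
        by (simp add: y_def inner_diff_right inner_diff_left inner_axis_axis)
      ultimately show ?thesis by linarith
    qed simp
  qed (rule s)
next
  assume "x \<in> Pset"
  then obtain c :: "real^('g option)" where c: "c \<in> cube" and xc: "x = proj_mat *v c"
    using P_eq by (metis imageE)
  show "\<forall>y. (\<forall>j. y $ j \<in> \<int>) \<and> (\<Sum>j\<in>UNIV. y $ j) = 0 \<longrightarrow> x \<bullet> x \<le> (x - y) \<bullet> (x - y)"
  proof (intro allI impI, elim conjE)
    fix y :: "real^('g option)"
    assume yi: "\<forall>j. y $ j \<in> \<int>" and ys: "(\<Sum>j\<in>UNIV. y $ j) = 0"
    have "x \<bullet> y = (\<Sum>j\<in>UNIV. c $ j * y $ j) - (\<Sum>j\<in>UNIV. c $ j) / (gnum TYPE('g) + 1) * (\<Sum>j\<in>UNIV. y $ j)"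
      by (simp add: xc inner_vec_def proj_apply left_diff_distrib sum_subtractf sum_distrib_left)
    then have xy: "x \<bullet> y = (\<Sum>j\<in>UNIV. c $ j * y $ j)" using ys by simp
    have "2 * (x \<bullet> y) \<le> y \<bullet> y"
    proof -
      have "2 * (x \<bullet> y) = (\<Sum>j\<in>UNIV. 2 * c $ j * y $ j)" by (simp add: xy sum_distrib_left mult.assoc)
      also have "\<dots> \<le> (\<Sum>j\<in>UNIV. y $ j * y $ j)"
        using c yi by (intro sum_mono int_term) (auto simp: cube_def)
      also have "\<dots> = y \<bullet> y" by (simp add: inner_vec_def)
      finally show ?thesis .
    qed
    moreover have "(x - y) \<bullet> (x - y) = x \<bullet> x - 2 * (x \<bullet> y) + y \<bullet> y"
      by (simp add: inner_diff_left inner_diff_right inner_commute)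
    ultimately show "x \<bullet> x \<le> (x - y) \<bullet> (x - y)" by linarith
  qed
qed


lemma vor_char: "(a :: real^'g::finite) \<in> voronoi_Q \<longleftrightarrow> BT a \<in> Pset"
proof -
  have "a \<in> voronoi_Q \<longleftrightarrow> (\<forall>c\<in>int_vecs. BT a \<bullet> BT a \<le> (BT a - BT c) \<bullet> (BT a - BT c))"
    by (simp add: voronoi_Q_def Q_form linear_diff[OF BT_linear])
  also have "\<dots> \<longleftrightarrow> (\<forall>y. (\<forall>j. y $ j \<in> \<int>) \<and> (\<Sum>j\<in>UNIV. y $ j) = 0 \<longrightarrow> BT a \<bullet> BT a \<le> (BT a - y) \<bullet> (BT a - y))"
  proof safe
    fix y :: "real^('g option)"
    assume H: "\<forall>c\<in>int_vecs. BT a \<bullet> BT a \<le> (BT a - BT c) \<bullet> (BT a - BT c)"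
      and yi: "\<forall>j. y $ j \<in> \<int>" and ys: "(\<Sum>j\<in>UNIV. y $ j) = 0"
    have "BTinv y \<in> (int_vecs :: (real^'g) set)" using yi by (simp add: int_vecs_def BTinv_def)
    then show "BT a \<bullet> BT a \<le> (BT a - y) \<bullet> (BT a - y)"
      using H BT_BTinv[where 'g='g, OF ys] by metis
  next
    fix c :: "real^'g"
    assume H: "\<forall>y. (\<forall>j. y $ j \<in> \<int>) \<and> (\<Sum>j\<in>UNIV. y $ j) = 0 \<longrightarrow> BT a \<bullet> BT a \<le> (BT a - y) \<bullet> (BT a - y)"
      and c: "c \<in> int_vecs"
    have "\<forall>j. BT c $ j \<in> \<int>"
    proof
      fix j :: "'g option"
      show "BT c $ j \<in> \<int>" using c
        by (cases j) (auto simp: BT_None BT_Some int_vecs_def intro!: Ints_sum)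
    qed
    then show "BT a \<bullet> BT a \<le> (BT a - BT c) \<bullet> (BT a - BT c)" using H BT_sum by blast
  qed
  also have "\<dots> \<longleftrightarrow> BT a \<in> Pset" by (rule lat_char[OF BT_sum])
  finally show ?thesis .
qed

lemma BT_image_V: "BT ` (voronoi_Q :: (real^'g::finite) set) = Pset"
proof
  show "BT ` (voronoi_Q :: (real^'g::finite) set) \<subseteq> Pset" by (auto simp: vor_char)
  show "Pset \<subseteq> BT ` (voronoi_Q :: (real^'g::finite) set)"
  proof
    fix x :: "real^('g option)" assume x: "x \<in> Pset"
    then have s: "(\<Sum>j\<in>UNIV. x $ j) = 0" by (simp add: Pset_def)
    have "BT (BTinv x :: real^'g) = x" by (rule BT_BTinv[OF s])
    moreover then have "(BTinv x :: real^'g) \<in> voronoi_Q" using x by (simp add: vor_char)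
    ultimately show "x \<in> BT ` voronoi_Q" by (metis image_eqI)
  qed
qed

lemma cube_cbox: "(cube :: (real^'n::finite) set) = cbox (\<chi> i. - 1/2) (\<chi> i. 1/2)"
  unfolding cube_def abs_le_iff set_eq_iff mem_box_cart mem_Collect_eq vec_lambda_beta
  by (metis minus_divide_left minus_le_iff)

lemma cube_compact: "compact (cube :: (real^'n::finite) set)"
  by (simp add: cube_cbox)

lemma cube_convex: "convex (cube :: (real^'n::finite) set)"
  by (simp add: cube_cbox)

lemma P_compact: "compact (Pset :: (real^('g::finite option)) set)"
  unfolding P_eq[symmetric]
  by (intro compact_continuous_image cube_compact linear_continuous_on)
    (simp add: linear_conv_bounded_linear[symmetric])

lemma P_convex: "convex (Pset :: (real^('g::finite option)) set)"
  unfolding P_eq[symmetric]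
  by (intro convex_linear_image cube_convex matrix_vector_mul_linear)


lemma card_option_set: "card {j::'g::finite option. P j} = card {l. P (Some l)} + (if P None then 1 else 0)"
proof -
  have e: "{j. P j} = (if P None then {None} else {}) \<union> Some ` {l. P (Some l)}"
    by (auto simp: image_iff) (metis option.exhaust)+
  have "card (Some ` {l. P (Some l)}) = card {l. P (Some l)}" by (rule card_image) (simp add: inj_on_def)
  then show ?thesis by (subst e, subst card_Un_disjoint) auto
qed

lemma sum_indic: "(\<Sum>j\<in>(UNIV::'a::finite set). if P j then d else 0) = real (card {j. P j}) * (d::real)"
  by (simp add: sum.If_cases)

lemma perm_sum:
  assumes x: "(x :: real^('g::finite option)) \<in> perm_class k"
  shows "(\<Sum>j\<in>UNIV. x $ j) = 0"
proof -
  define n where "n = gnum TYPE('g) + 1"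
  have n0: "n \<noteq> 0" using gnum_pos[where 'g='g] by (simp add: n_def)
  have e: "x $ j = real k / n + (if x $ j = - (n - real k) / n then - 1 else 0)" for j
    using x n0 by (auto simp: perm_class_def n_def field_simps)
  have c: "card {j. x $ j = - (n - real k) / n} = k" using x by (simp add: perm_class_def n_def)
  have "(\<Sum>j\<in>UNIV. x $ j) = (\<Sum>j\<in>UNIV. real k / n + (if x $ j = - (n - real k) / n then - 1 else 0))"
    by (subst e) simp
  also have "\<dots> = real CARD('g option) * (real k / n) - real k"
    by (simp only: sum.distrib sum_indic c) simp
  also have "\<dots> = 0" using n0 by (simp only: card_opt n_def[symmetric]) simp
  finally show ?thesis .
qed

lemma perm_vals:
  assumes x: "(x :: real^('g::finite option)) \<in> perm_class k"
  shows "x $ j = real k / (gnum TYPE('g) + 1) \<or> x $ j = real k / (gnum TYPE('g) + 1) - 1"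
proof -
  have n0: "gnum TYPE('g) + 1 \<noteq> 0" using gnum_pos[where 'g='g] by simp
  then show ?thesis using x by (auto simp: perm_class_def field_simps)
qed

lemma perm_P: "(x :: real^('g::finite option)) \<in> perm_class k \<Longrightarrow> x \<in> Pset"
proof -
  assume x: "x \<in> perm_class k"
  have "x $ i - x $ j \<le> 1" for i j
    using perm_vals[OF x, of i] perm_vals[OF x, of j] by auto
  then show ?thesis using perm_sum[OF x] by (simp add: Pset_def)
qed

lemma u_lemma:
  fixes a b u :: real
  assumes "0 < u" "u < 1" "a \<le> 1" "b \<le> 1" "(1 - u) * a + u * b = 1"
  shows "a = 1"
proof (rule ccontr)
  assume "a \<noteq> 1"
  then have "a < 1" using assms by simp
  then have "(1 - u) * a < (1 - u) * 1" using assms by (intro mult_strict_left_mono) auto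
  moreover have "u * b \<le> u * 1" using assms by (intro mult_left_mono) auto
  ultimately show False using assms(5) by (smt (verit))
qed


lemma perm_beta: "(x :: real^('g::finite option)) \<in> perm_class k \<Longrightarrow>
  card {j. x $ j = real k / (gnum TYPE('g) + 1) - 1} = k"
proof -
  assume x: "x \<in> perm_class k"
  have n0: "gnum TYPE('g) + 1 \<noteq> 0" using gnum_pos[where 'g='g] by simp
  have "- (gnum TYPE('g) + 1 - real k) / (gnum TYPE('g) + 1) = real k / (gnum TYPE('g) + 1) - 1"
    using n0 by (simp add: field_simps)
  then show ?thesis using x by (simp add: perm_class_def)
qed

lemma pin:
  fixes x w :: "real^('g::finite option)"
  assumes x: "x \<in> perm_class k" and k1: "1 \<le> k" and kN: "k \<le> CARD('g)" and w: "w \<in> Pset"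
    and H: "\<And>i j. x $ i = real k / (gnum TYPE('g) + 1) \<Longrightarrow> x $ j = real k / (gnum TYPE('g) + 1) - 1
               \<Longrightarrow> w $ i - w $ j = 1"
  shows "w = x"
proof -
  define \<alpha> where "\<alpha> = real k / (gnum TYPE('g) + 1)"
  have n0: "gnum TYPE('g) + 1 \<noteq> 0" using gnum_pos[where 'g='g] by simp
  have c: "card {j. x $ j = \<alpha> - 1} = k" using perm_beta[OF x] by (simp add: \<alpha>_def)
  then have "card {j. x $ j = \<alpha> - 1} \<noteq> 0" using k1 by simp
  then have "{j. x $ j = \<alpha> - 1} \<noteq> {}" by (metis card.empty)
  then obtain j0 where j0: "x $ j0 = \<alpha> - 1" by auto
  have "{j. x $ j = \<alpha> - 1} \<noteq> UNIV" using c kN by auto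
  then obtain i0 where "x $ i0 \<noteq> \<alpha> - 1" by auto
  then have i0: "x $ i0 = \<alpha>" using perm_vals[OF x, of i0] by (simp add: \<alpha>_def)
  define d where "d m = w $ m - x $ m" for m
  have dm: "d m = d j0" for m
  proof (cases "x $ m = \<alpha>")
    case True
    then show ?thesis using H[of m j0] j0 by (simp add: d_def \<alpha>_def)
  next
    case False
    then have xm: "x $ m = \<alpha> - 1" using perm_vals[OF x, of m] by (simp add: \<alpha>_def)
    have "d m = d i0" using H[of i0 m] xm i0 by (simp add: d_def \<alpha>_def)
    also have "\<dots> = d j0" using H[of i0 j0] j0 i0 by (simp add: d_def \<alpha>_def)
    finally show ?thesis .
  qed
  have "(\<Sum>m\<in>UNIV. d m) = 0"
    using w perm_sum[OF x] by (simp add: d_def sum_subtractf Pset_def)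
  moreover have "(\<Sum>m\<in>UNIV. d m) = (\<Sum>m\<in>(UNIV::'g option set). d j0)" by (intro sum.cong refl) (rule dm)
  moreover have "(\<Sum>m\<in>(UNIV::'g option set). d j0) = real CARD('g option) * d j0" by simp
  ultimately have "d j0 = 0" by simp
  then have "\<forall>m. d m = 0" using dm by metis
  then show ?thesis by (simp add: vec_eq_iff d_def)
qed

lemma perm_extreme:
  fixes x :: "real^('g::finite option)"
  assumes x: "x \<in> perm_class k" and k1: "1 \<le> k" and kN: "k \<le> CARD('g)"
  shows "x extreme_point_of Pset"
  unfolding extreme_point_of_def
proof (intro conjI ballI)
  show "x \<in> Pset" by (rule perm_P[OF x])
  fix y z :: "real^('g option)" assume y: "y \<in> Pset" and z: "z \<in> Pset"
  show "x \<notin> open_segment y z"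
  proof
    assume "x \<in> open_segment y z"
    then obtain u where yz: "y \<noteq> z" and u: "0 < u" "u < 1" and xe: "x = (1 - u) *\<^sub>R y + u *\<^sub>R z"
      unfolding in_segment by blast
    have both: "y $ i - y $ j = 1 \<and> z $ i - z $ j = 1"
      if "x $ i = real k / (gnum TYPE('g) + 1)" "x $ j = real k / (gnum TYPE('g) + 1) - 1" for i j
    proof -
      have eq: "(1 - u) * (y $ i - y $ j) + u * (z $ i - z $ j) = 1"
      proof -
        have "x $ i - x $ j = 1" using that by simp
        then show ?thesis using xe by (simp add: algebra_simps)
      qed
      have a: "y $ i - y $ j \<le> 1" "z $ i - z $ j \<le> 1" using y z by (auto simp: Pset_def)
      have "y $ i - y $ j = 1" by (rule u_lemma[OF u a eq])
      moreover have "z $ i - z $ j = 1"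
      proof (rule u_lemma[of "1 - u" "z $ i - z $ j" "y $ i - y $ j"])
        show "(1 - (1 - u)) * (z $ i - z $ j) + (1 - u) * (y $ i - y $ j) = 1" using eq by simp
      qed (use u a in auto)
      ultimately show ?thesis by simp
    qed
    have "y = x" by (rule pin[OF x k1 kN y]) (rule conjunct1[OF both])
    moreover have "z = x" by (rule pin[OF x k1 kN z]) (rule conjunct2[OF both])
    ultimately show False using yz by simp
  qed
qed


lemma ext_cube:
  fixes c :: "real^'n::finite"
  assumes c: "c extreme_point_of cube"
  shows "\<bar>c $ j\<bar> = 1/2"
proof (rule ccontr)
  assume ne: "\<bar>c $ j\<bar> \<noteq> 1/2"
  have cc: "c \<in> cube" using c by (simp add: extreme_point_of_def)
  then have hj: "\<bar>c $ j\<bar> \<le> 1/2" by (simp add: cube_def)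
  with ne have lt: "\<bar>c $ j\<bar> < 1/2" by simp
  define e where "e = 1/2 - \<bar>c $ j\<bar>"
  have e0: "e > 0" using lt by (simp add: e_def)
  define a where "a = c + e *\<^sub>R axis j 1"
  define b where "b = c - e *\<^sub>R axis j 1"
  have "a \<in> cube" unfolding cube_def
  proof (intro CollectI allI)
    fix m show "\<bar>a $ m\<bar> \<le> 1/2"
    proof (cases "m = j")
      case True
      have "a $ j = c $ j + e" by (simp add: a_def axis_def)
      then show ?thesis using True hj unfolding e_def abs_le_iff by (cases "c $ j \<ge> 0") auto
    qed (use cc in \<open>auto simp: a_def axis_def cube_def\<close>)
  qed
  moreover have "b \<in> cube" unfolding cube_def
  proof (intro CollectI allI)
    fix m show "\<bar>b $ m\<bar> \<le> 1/2"
    proof (cases "m = j")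
      case True
      have "b $ j = c $ j - e" by (simp add: b_def axis_def)
      then show ?thesis using True hj unfolding e_def abs_le_iff by (cases "c $ j \<ge> 0") auto
    qed (use cc in \<open>auto simp: b_def axis_def cube_def\<close>)
  qed
  moreover have "a \<noteq> b"
  proof
    assume "a = b"
    then have "a $ j = b $ j" by simp
    then show False using e0 by (simp add: a_def b_def axis_def)
  qed
  moreover have "midpoint a b = c" by (simp add: midpoint_def a_def b_def vec_eq_iff)
  ultimately show False using c midpoint_in_open_segment[of a b]
    unfolding extreme_point_of_def by metis
qed

lemma zero_not_ext: "\<not> (0 :: real^('g::finite option)) extreme_point_of Pset"
proof
  assume ext: "(0 :: real^('g::finite option)) extreme_point_of Pset"
  define N where "N = gnum TYPE('g)"
  have N1: "N \<ge> 1" using gnum_pos[where 'g='g] by (simp add: N_def)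
  define u :: "real^('g option)" where "u = (\<chi> j. if j = None then N / (N + 1) else - 1 / (N + 1))"
  have uN: "u $ None = N / (N+1)" and uS: "u $ Some l = - 1 / (N+1)" for l by (simp_all add: u_def)
  have su: "(\<Sum>j\<in>UNIV. u $ j) = 0"
    by (simp add: sum_option uN uS N_def gnum_def)
  have du: "u $ i - u $ j \<le> 1" for i j
    using N1 by (cases i; cases j) (simp_all add: uN uS field_simps)
  have "u \<in> Pset" using su du by (simp add: Pset_def)
  moreover have "- u \<in> Pset"
  proof -
    have "(\<Sum>j\<in>UNIV. (- u) $ j) = 0" using su by (simp add: sum_negf)
    moreover have "(- u) $ i - (- u) $ j \<le> 1" for i j using du[of j i] by simp
    ultimately show ?thesis by (simp add: Pset_def)
  qed
  moreover have "u \<noteq> - u"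
  proof
    assume "u = - u"
    then have "u $ None = - u $ None" by (metis vector_uminus_component)
    then show False using N1 by (simp add: uN)
  qed
  moreover have "midpoint u (- u) = 0" by (simp add: midpoint_def)
  ultimately show False using ext midpoint_in_open_segment[of u "- u"]
    unfolding extreme_point_of_def by metis
qed


lemma ext_P_sub:
  fixes x :: "real^('g::finite option)"
  assumes x: "x extreme_point_of Pset"
  shows "\<exists>k\<in>{1..CARD('g)}. x \<in> perm_class k"
proof -
  have "Pset = (\<lambda>c. proj_mat *v c) ` (convex hull {c. c extreme_point_of (cube :: (real^('g option)) set)})"
    using Krein_Milman_Minkowski[OF cube_compact cube_convex] P_eq by metis
  also have "\<dots> = convex hull ((\<lambda>c. proj_mat *v c) ` {c. c extreme_point_of (cube :: (real^('g option)) set)})"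
    by (rule convex_hull_linear_image) simp
  finally have "x \<in> (\<lambda>c. proj_mat *v c) ` {c. c extreme_point_of (cube :: (real^('g option)) set)}"
    using x extreme_point_of_convex_hull by metis
  then obtain c :: "real^('g option)" where c: "c extreme_point_of cube" and xc: "x = proj_mat *v c" by auto
  have cj: "\<bar>c $ j\<bar> = 1/2" for j by (rule ext_cube[OF c])
  define n where "n = gnum TYPE('g) + 1"
  have n1: "n \<ge> 2" using gnum_pos[where 'g='g] by (simp add: n_def)
  define k where "k = card {j. c $ j = - 1/2}"
  have ce: "c $ j = 1/2 + (if c $ j = - 1/2 then - 1 else 0)" for j
    using cj[of j] by (auto simp: abs_if split: if_splits)
  have sc: "(\<Sum>j\<in>UNIV. c $ j) = n / 2 - real k"
  proof -
    have "(\<Sum>j\<in>UNIV. c $ j) = (\<Sum>j\<in>UNIV. 1/2 + (if c $ j = - 1/2 then - 1 else 0))"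
      by (subst ce) simp
    also have "\<dots> = real CARD('g option) / 2 - real k"
      by (simp only: sum.distrib sum_indic k_def) simp
    finally show ?thesis by (simp only: card_opt n_def)
  qed
  have xj: "x $ j = (if c $ j = - 1/2 then real k / n - 1 else real k / n)" for j
  proof -
    have "x $ j = c $ j - (n / 2 - real k) / n" by (simp add: xc proj_apply sc n_def)
    then show ?thesis using ce[of j] n1 by (auto simp: field_simps split: if_splits)
  qed
  have kle: "k \<le> CARD('g) + 1"
    using card_mono[of UNIV "{j. c $ j = - 1/2}"] by (simp add: k_def)
  have "k \<noteq> 0"
  proof
    assume "k = 0"
    then have "\<forall>j. c $ j \<noteq> - 1/2" by (simp add: k_def)
    then have "x = 0" using \<open>k = 0\<close> by (simp add: vec_eq_iff xj)
    then show False using x zero_not_ext by metis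
  qed
  moreover have "k \<noteq> CARD('g) + 1"
  proof
    assume kN: "k = CARD('g) + 1"
    then have "card {j. c $ j = - 1/2} = card (UNIV :: 'g option set)" by (simp add: k_def)
    then have "{j. c $ j = - 1/2} = UNIV" by (metis card_eq_UNIV_imp_eq_UNIV finite)
    moreover have "real k / n - 1 = 0" using kN n1 by (simp add: n_def gnum_def)
    ultimately have "x = 0" by (auto simp: vec_eq_iff xj)
    then show False using x zero_not_ext by metis
  qed
  ultimately have k1: "k \<in> {1..CARD('g)}" using kle by auto
  have ab: "- (n - real k) / n = real k / n - 1" using n1 by (simp add: field_simps)
  have "x \<in> perm_class k"
    unfolding perm_class_def n_def[symmetric] ab
  proof (intro CollectI conjI allI)
    fix j show "x $ j \<in> {real k / n, real k / n - 1}" by (simp add: xj)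
  next
    have "{j. x $ j = real k / n - 1} = {j. c $ j = - 1/2}" by (auto simp: xj)
    then show "card {j. x $ j = real k / n - 1} = k" by (simp add: k_def)
  qed
  then show ?thesis using k1 by blast
qed


lemma BT_class:
  assumes k1: "1 \<le> k" and kN: "k \<le> CARD('g::finite)"
  shows "BT ` (vertex_class k :: (real^'g) set) = perm_class k"
proof -
  define N where "N = gnum TYPE('g)"
  define n where "n = N + 1"
  have N1: "N \<ge> 1" using gnum_pos[where 'g='g] by (simp add: N_def)
  have NC: "real CARD('g) = N" by (simp add: N_def gnum_def)
  have n0: "n \<noteq> 0" "n > 0" using N1 by (simp_all add: n_def)
  have gd: "(n - real k) / n = - (real k / n) + 1" using n0 by (simp add: field_simps)
  have bd: "- (n - real k) / n = real k / n - 1" using n0 by (simp add: field_simps)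
  have VC: "vertex_class k = {a :: real^'g. (\<forall>i. a $ i \<in> {- (real k / n), - (real k / n) + 1}) \<and>
      card {i. a $ i = - (real k / n) + 1} \<in> {k, k - 1}}"
    unfolding vertex_class_def N_def[symmetric] n_def[symmetric] gd by simp
  have PC: "perm_class k = {x :: real^('g option). (\<forall>j. x $ j \<in> {real k / n, real k / n - 1}) \<and>
      card {j. x $ j = real k / n - 1} = k}"
    unfolding perm_class_def N_def[symmetric] n_def[symmetric] bd by simp
  show ?thesis unfolding VC PC
  proof (intro equalityI subsetI)
    fix y assume "y \<in> BT ` {a :: real^'g. (\<forall>i. a $ i \<in> {- (real k / n), - (real k / n) + 1}) \<and>
      card {i. a $ i = - (real k / n) + 1} \<in> {k, k - 1}}"
    then obtain a :: "real^'g" where ya: "y = BT a" and av: "\<forall>i. a $ i \<in> {- (real k / n), - (real k / n) + 1}"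
      and ac: "card {i. a $ i = - (real k / n) + 1} \<in> {k, k - 1}" by blast
    define m where "m = card {i. a $ i = - (real k / n) + 1}"
    have ae: "a $ i = - (real k / n) + (if a $ i = - (real k / n) + 1 then 1 else 0)" for i
      using av by auto
    have sa: "(\<Sum>i\<in>UNIV. a $ i) = N * (- (real k / n)) + real m"
    proof -
      have "(\<Sum>i\<in>UNIV. a $ i) = (\<Sum>i\<in>UNIV. - (real k / n) + (if a $ i = - (real k / n) + 1 then 1 else 0))"
        by (subst ae) simp
      also have "\<dots> = real CARD('g) * (- (real k / n)) + real m"
        by (simp only: sum.distrib sum_indic m_def) simp
      finally show ?thesis by (simp only: NC)
    qed
    have none: "BT a $ None = (if m = k then real k / n else real k / n - 1)"
    proof (cases "m = k")
      case True
      then show ?thesis using n0 by (simp add: BT_None sa n_def field_simps)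
    next
      case False
      then have "m = k - 1" using ac by (simp add: m_def)
      then have rk: "real k = real m + 1" using k1 by simp
      show ?thesis using False n0 unfolding BT_None sa n_def rk by (simp add: field_simps)
    qed
    have ne: "real k / n \<noteq> real k / n - 1" by simp
    have allj: "\<forall>j. BT a $ j \<in> {real k / n, real k / n - 1}"
    proof
      fix j :: "'g option"
      show "BT a $ j \<in> {real k / n, real k / n - 1}"
      proof (cases j)
        case (Some l)
        have "a $ l \<in> {- (real k / n), - (real k / n) + 1}" using av by blast
        then show ?thesis using Some by (auto simp: BT_Some)
      qed (simp add: none)
    qed
    have "card {j. BT a $ j = real k / n - 1} = card {l. BT a $ Some l = real k / n - 1} + (if BT a $ None = real k / n - 1 then 1 else 0)"
      by (rule card_option_set)
    also have "{l. BT a $ Some l = real k / n - 1} = {i. a $ i = - (real k / n) + 1}"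
      by (auto simp: BT_Some)
    also have "card \<dots> + (if BT a $ None = real k / n - 1 then 1 else 0) = k"
      using ac ne k1 unfolding m_def[symmetric] by (auto simp: none)
    finally have "card {j. BT a $ j = real k / n - 1} = k" .
    with allj show "y \<in> {x :: real^('g option). (\<forall>j. x $ j \<in> {real k / n, real k / n - 1}) \<and>
      card {j. x $ j = real k / n - 1} = k}" using ya by blast
  next
    fix x :: "real^('g option)"
    assume "x \<in> {x :: real^('g option). (\<forall>j. x $ j \<in> {real k / n, real k / n - 1}) \<and>
      card {j. x $ j = real k / n - 1} = k}"
    then have xv: "\<forall>j. x $ j \<in> {real k / n, real k / n - 1}" and xc: "card {j. x $ j = real k / n - 1} = k" by auto
    have xp: "x \<in> perm_class k" unfolding PC using xv xc by simp
    have s: "(\<Sum>j\<in>UNIV. x $ j) = 0" by (rule perm_sum[OF xp])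
    have e1: "BT (BTinv x :: real^'g) = x" by (rule BT_BTinv[OF s])
    have e2: "(\<forall>i. (BTinv x :: real^'g) $ i \<in> {- (real k / n), - (real k / n) + 1}) \<and>
      card {i. (BTinv x :: real^'g) $ i = - (real k / n) + 1} \<in> {k, k - 1}"
    proof
      show "\<forall>i. (BTinv x :: real^'g) $ i \<in> {- (real k / n), - (real k / n) + 1}"
        using xv by (auto simp: BTinv_def)
      have "k = card {l. x $ Some l = real k / n - 1} + (if x $ None = real k / n - 1 then 1 else 0)"
        using xc card_option_set[of "\<lambda>j. x $ j = real k / n - 1"] by simp
      moreover have "{i. (BTinv x :: real^'g) $ i = - (real k / n) + 1} = {l. x $ Some l = real k / n - 1}"
        by (auto simp: BTinv_def)
      ultimately show "card {i. (BTinv x :: real^'g) $ i = - (real k / n) + 1} \<in> {k, k - 1}"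
        by (auto split: if_splits)
    qed
    show "x \<in> BT ` {a. (\<forall>i. a $ i \<in> {- (real k / n), - (real k / n) + 1}) \<and>
      card {i. a $ i = - (real k / n) + 1} \<in> {k, k - 1}}"
      by (rule image_eqI[where f=BT and x="BTinv x :: real^'g"]) (use e1 e2 in simp_all)
  qed
qed


lemma ext_iff: "(v :: real^'g::finite) extreme_point_of voronoi_Q \<longleftrightarrow> BT v extreme_point_of Pset"
proof -
  have "BT v extreme_point_of Pset \<longleftrightarrow> BT ` {v} face_of BT ` (voronoi_Q :: (real^'g) set)"
    by (simp add: face_of_singleton BT_image_V)
  also have "\<dots> \<longleftrightarrow> {v} face_of voronoi_Q" by (rule face_of_linear_image[OF BT_linear BT_inj])
  finally show ?thesis by (simp add: face_of_singleton)
qed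

lemma extV: "BT ` {v :: real^'g::finite. v extreme_point_of voronoi_Q} = {x. x extreme_point_of Pset}"
proof
  show "BT ` {v :: real^'g::finite. v extreme_point_of voronoi_Q} \<subseteq> {x. x extreme_point_of Pset}"
    using ext_iff by blast
  show "{x. x extreme_point_of Pset} \<subseteq> BT ` {v :: real^'g::finite. v extreme_point_of voronoi_Q}"
  proof
    fix x :: "real^('g option)" assume "x \<in> {x. x extreme_point_of Pset}"
    then have xe: "x extreme_point_of Pset" by simp
    then have "x \<in> Pset" by (simp add: extreme_point_of_def)
    then have e1: "BT (BTinv x :: real^'g) = x" by (intro BT_BTinv) (simp add: Pset_def)
    then have "(BTinv x :: real^'g) extreme_point_of voronoi_Q" using xe ext_iff by metis
    then show "x \<in> BT ` {v :: real^'g::finite. v extreme_point_of voronoi_Q}"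
      by (intro image_eqI[where f=BT and x="BTinv x :: real^'g"]) (use e1 in simp_all)
  qed
qed

lemma extP: "{x :: real^('g::finite option). x extreme_point_of Pset} = (\<Union>k\<in>{1..CARD('g)}. perm_class k)"
  using ext_P_sub perm_extreme by fastforce

lemma BTVQ: "(BT_VQ :: (real^('g::finite option)) set) = Pset"
  unfolding BT_VQ_def extV by (rule sym[OF Krein_Milman_Minkowski[OF P_compact P_convex]])

theorem proposition3p4:
  shows "comb_equiv (voronoi_Q :: (real^'g::finite) set) (BT_VQ :: (real^('g option)) set)
     \<and> {v. v extreme_point_of (BT_VQ :: (real^('g option)) set)}
         = (\<Union>k\<in>{1..CARD('g)}. BT ` (vertex_class k :: (real^'g) set))
     \<and> (\<forall>k\<in>{1..CARD('g)}. BT ` (vertex_class k :: (real^'g) set) = perm_class k)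
     \<and> (BT_VQ :: (real^('g option)) set) = (\<lambda>x. proj_mat *v x) ` cube"
proof (intro conjI)
  show cls: "\<forall>k\<in>{1..CARD('g)}. BT ` (vertex_class k :: (real^'g) set) = perm_class k"
    using BT_class[where 'g='g] by auto
  show "{v. v extreme_point_of (BT_VQ :: (real^('g option)) set)}
         = (\<Union>k\<in>{1..CARD('g)}. BT ` (vertex_class k :: (real^'g) set))"
    unfolding BTVQ extP using cls by simp
  show "(BT_VQ :: (real^('g option)) set) = (\<lambda>x. proj_mat *v x) ` cube"
    by (simp add: BTVQ P_eq)
  show "comb_equiv (voronoi_Q :: (real^'g::finite) set) (BT_VQ :: (real^('g option)) set)"
    unfolding comb_equiv_def BTVQ
  proof (intro exI conjI allI impI)
    let ?V = "voronoi_Q :: (real^'g) set"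
    show "bij_betw (image BT) {F. F face_of ?V} {G. G face_of Pset}"
      unfolding bij_betw_def
    proof
      show "inj_on (image BT) {F. F face_of ?V}"
        using inj_image_eq_iff[OF BT_inj[where 'g='g]] by (simp add: inj_on_def)
      show "image BT ` {F. F face_of ?V} = {G. G face_of Pset}"
      proof
        show "image BT ` {F. F face_of ?V} \<subseteq> {G. G face_of Pset}"
        proof clarify
          fix F assume "F face_of ?V"
          then have "BT ` F face_of BT ` ?V" using face_of_linear_image[OF BT_linear BT_inj] by blast
          then show "BT ` F face_of Pset" by (simp only: BT_image_V)
        qed
        show "{G. G face_of Pset} \<subseteq> image BT ` {F. F face_of ?V}"
        proof
          fix G :: "(real^('g option)) set" assume "G \<in> {G. G face_of Pset}"
          then have G: "G face_of Pset" by simp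
          then have GP: "G \<subseteq> Pset" by (rule face_of_imp_subset)
          have e: "BT ` (BTinv ` G :: (real^'g) set) = G"
          proof -
            have "BT ` (BTinv ` G :: (real^'g) set) = (\<lambda>x. BT (BTinv x :: real^'g)) ` G" by (simp add: image_image)
            also have "\<dots> = (\<lambda>x. x) ` G"
              using GP by (intro image_cong refl BT_BTinv) (auto simp: Pset_def)
            finally show ?thesis by simp
          qed
          then have "(BTinv ` G :: (real^'g) set) face_of ?V"
            using face_of_linear_image[OF BT_linear BT_inj, of "BTinv ` G" ?V] G BT_image_V[where 'g='g] by simp
          then show "G \<in> image BT ` {F. F face_of ?V}" using e by blast
        qed
      qed
    qed
    fix F1 F2 :: "(real^'g) set"
    show "F1 \<subseteq> F2 \<longleftrightarrow> BT ` F1 \<subseteq> BT ` F2"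
      using inj_image_subset_iff[OF BT_inj[where 'g='g]] by simp
  qed
qed

end
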